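(* (i) For every even integer $q\ge 2$ there exists a $q$-solvable directed graph with $3q/2$ vertices and clique number $q/2$. (ii) For every positive integer $q$ divisible by $3$ there exists a $q$-solvable directed graph on $4q$ vertices with clique number $q/3$. (iii) For every positive integer $q$ divisible by $4$ there exists a $q$-solvable directed graph on $10q$ vertices with clique number $q/4$.
   Context: A directed graph $D=(V,E)$ has arcs $E \subseteq \{(u,v)\in V^2 : u \neq v\}$ (bidirectional pairs allowed). $N^-(v)=\{u:(u,v)\in E\}$. For $q\ge2$ let $[q]=\{0,\dots,q-1\}$. A $D$-function over $[q]$ is a map $f=(f_v)_{v\in V}:[q]^V\to[q]^V$ with each $f_v(x)$ depending only on $(x_u)_{u\in N^-(v)}$. $D$ is $q$-solvable if some $D$-function $f$ over $[q]$ has the property that for every $x\in[q]^V$ there is $v$ with $f_v(x)=x_v$. A clique in a directed graph is a set $S$ of vertices such that $(u,v)$ is an arc for every ordered pair of distinct $u,v\in S$ (i.e. all pairs are joined in both directions); the clique number is the maximum size of a clique. *)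

theory Defs
  imports Main "HOL-Library.FuncSet"
begin

definition digraph :: "'a set \<Rightarrow> ('a \<times> 'a) set \<Rightarrow> bool" where
  "digraph V E \<longleftrightarrow> finite V \<and> E \<subseteq> {(u, v). u \<in> V \<and> v \<in> V \<and> u \<noteq> v}"

definition in_nbrs :: "('a \<times> 'a) set \<Rightarrow> 'a \<Rightarrow> 'a set" where
  "in_nbrs E v = {u. (u, v) \<in> E}"

definition configs :: "nat \<Rightarrow> 'a set \<Rightarrow> ('a \<Rightarrow> nat) set" where
  "configs q V = V \<rightarrow>\<^sub>E {..<q}"

text \<open>A D-function over [q]: f v x is the v-th coordinate of f(x); it takes
  values in [q] and depends only on the values of x on the in-neighbourhood of v.\<close>
definition D_function :: "nat \<Rightarrow> 'a set \<Rightarrow> ('a \<times> 'a) set \<Rightarrow> ('a \<Rightarrow> ('a \<Rightarrow> nat) \<Rightarrow> nat) \<Rightarrow> bool" where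
  "D_function q V E f \<longleftrightarrow>
     (\<forall>v\<in>V. \<forall>x\<in>configs q V. f v x < q) \<and>
     (\<forall>v\<in>V. \<forall>x\<in>configs q V. \<forall>y\<in>configs q V.
        (\<forall>u\<in>in_nbrs E v. x u = y u) \<longrightarrow> f v x = f v y)"

definition q_solvable :: "nat \<Rightarrow> 'a set \<Rightarrow> ('a \<times> 'a) set \<Rightarrow> bool" where
  "q_solvable q V E \<longleftrightarrow>
     (\<exists>f. D_function q V E f \<and> (\<forall>x\<in>configs q V. \<exists>v\<in>V. f v x = x v))"

definition is_clique :: "'a set \<Rightarrow> ('a \<times> 'a) set \<Rightarrow> 'a set \<Rightarrow> bool" where
  "is_clique V E S \<longleftrightarrow> S \<subseteq> V \<and> (\<forall>u\<in>S. \<forall>v\<in>S. u \<noteq> v \<longrightarrow> (u, v) \<in> E)"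

definition clique_number :: "'a set \<Rightarrow> ('a \<times> 'a) set \<Rightarrow> nat" where
  "clique_number V E = Max (card ` {S. is_clique V E S})"

end

theory Submission
  imports Defs
begin


lemma win3: "(a::nat)<3 \<Longrightarrow> (b::nat)<3 \<Longrightarrow> (c::nat)<3 \<Longrightarrow> (d::nat)<3 \<Longrightarrow> (e::nat)<3 \<Longrightarrow> (f::nat)<3 \<Longrightarrow>
  (b+d) mod 3 = a \<or> (2*c+2*d+2*f) mod 3 = b \<or> (2*a+2*f) mod 3 = c \<or> (c+2*e) mod 3 = d \<or> (2*a+b+c) mod 3 = e \<or> (2*a+2*d+2*e) mod 3 = f"
proof -
  have t: "(x::nat) < 3 \<Longrightarrow> x = 0 \<or> x = 1 \<or> x = 2" for x by auto
  assume "a<3" "b<3" "c<3" "d<3" "e<3" "f<3"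
  then show ?thesis
    using t[OF \<open>a<3\<close>] t[OF \<open>b<3\<close>] t[OF \<open>c<3\<close>] t[OF \<open>d<3\<close>] t[OF \<open>e<3\<close>] t[OF \<open>f<3\<close>] by (elim disjE) simp_all
qed


lemma cov7: fixes pa pb pc ra rb rc :: nat shows
 "(even pc \<and> even rc) \<or> (even pb \<and> even rb) \<or> (even (pb+pc) \<and> even (rb+rc)) \<or> (even pa \<and> even ra)
  \<or> (even (pa+pc) \<and> even (ra+rc)) \<or> (even (pa+pb) \<and> even (ra+rb)) \<or> (even (pa+pb+pc) \<and> even (ra+rb+rc))"
  by (cases "even pa"; cases "even pb"; cases "even pc"; cases "even ra"; cases "even rb"; cases "even rc") auto

lemma fin4: "(z::nat) < 4 \<Longrightarrow> even (z div 2 + A) \<Longrightarrow> even (z + B) \<Longrightarrow> 2*(A mod 2) + B mod 2 = z"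
proof -
  assume a: "z < 4" "even (z div 2 + A)" "even (z + B)"
  have "z = 0 \<or> z = 1 \<or> z = 2 \<or> z = 3" using a(1) by auto
  then show ?thesis using a(2,3) by (elim disjE) (simp_all, presburger+)
qed

definition ins4 :: "nat \<Rightarrow> nat list" where
  "ins4 i = [[1,3,5],[2,3,6],[0,5,6],[2,4,5],[0,1,2],[1,4,6],[0,3,4]] ! i"
definition G4 :: "nat \<Rightarrow> nat list \<Rightarrow> nat" where
  "G4 i vs = 2*((sum_list (map (\<lambda>v. v div 2) vs)) mod 2) + (sum_list vs) mod 2"

lemma win4: assumes "\<And>u. u < 7 \<Longrightarrow> z u < (4::nat)" shows "\<exists>i<7. G4 i (map z (ins4 i)) = z i"
proof -
  define h where "h u = z u div 2" for u
  have "z 0 < 4" "z 1 < 4" "z 2 < 4" "z 3 < 4" "z 4 < 4" "z 5 < 4" "z 6 < 4" using assms by auto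
  note c = cov7[where pa="h 2+h 3+h 4+h 5" and pb="h 1+h 2+h 3+h 6" and pc="h 0+h 1+h 3+h 5"
                   and ra="z 2+z 3+z 4+z 5" and rb="z 1+z 2+z 3+z 6" and rc="z 0+z 1+z 3+z 5"]
  have e: "\<And>x y::nat. even (x + 2*y) = even x" by simp
  show ?thesis
  proof -
    have D: "(even (h 0 + (h 1+h 3+h 5)) \<and> even (z 0 + (z 1+z 3+z 5)))
     \<or> (even (h 1 + (h 2+h 3+h 6)) \<and> even (z 1 + (z 2+z 3+z 6)))
     \<or> (even (h 2 + (h 0+h 5+h 6)) \<and> even (z 2 + (z 0+z 5+z 6)))
     \<or> (even (h 3 + (h 2+h 4+h 5)) \<and> even (z 3 + (z 2+z 4+z 5)))
     \<or> (even (h 4 + (h 0+h 1+h 2)) \<and> even (z 4 + (z 0+z 1+z 2)))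
     \<or> (even (h 5 + (h 1+h 4+h 6)) \<and> even (z 5 + (z 1+z 4+z 6)))
     \<or> (even (h 6 + (h 0+h 3+h 4)) \<and> even (z 6 + (z 0+z 3+z 4)))"
      using c unfolding even_add by argo
    from D consider
       "even (h 0 + (h 1+h 3+h 5))" "even (z 0 + (z 1+z 3+z 5))"
     | "even (h 1 + (h 2+h 3+h 6))" "even (z 1 + (z 2+z 3+z 6))"
     | "even (h 2 + (h 0+h 5+h 6))" "even (z 2 + (z 0+z 5+z 6))"
     | "even (h 3 + (h 2+h 4+h 5))" "even (z 3 + (z 2+z 4+z 5))"
     | "even (h 4 + (h 0+h 1+h 2))" "even (z 4 + (z 0+z 1+z 2))"
     | "even (h 5 + (h 1+h 4+h 6))" "even (z 5 + (z 1+z 4+z 6))"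
     | "even (h 6 + (h 0+h 3+h 4))" "even (z 6 + (z 0+z 3+z 4))"
      by blast
    then show ?thesis
    proof cases
      case 1 then show ?thesis using fin4[OF \<open>z 0 < 4\<close>] unfolding h_def
        by (intro exI[of _ 0]) (simp add: G4_def ins4_def add.assoc)
    next
      case 2 then show ?thesis using fin4[OF \<open>z 1 < 4\<close>] unfolding h_def
        by (intro exI[of _ 1]) (simp add: G4_def ins4_def add.assoc)
    next
      case 3 then show ?thesis using fin4[OF \<open>z 2 < 4\<close>] unfolding h_def
        by (intro exI[of _ 2]) (simp add: G4_def ins4_def add.assoc)
    next
      case 4 then show ?thesis using fin4[OF \<open>z 3 < 4\<close>] unfolding h_def
        by (intro exI[of _ 3]) (simp add: G4_def ins4_def add.assoc)
    next
      case 5 then show ?thesis using fin4[OF \<open>z 4 < 4\<close>] unfolding h_def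
        by (intro exI[of _ 4]) (simp add: G4_def ins4_def add.assoc)
    next
      case 6 then show ?thesis using fin4[OF \<open>z 5 < 4\<close>] unfolding h_def
        by (intro exI[of _ 5]) (simp add: G4_def ins4_def add.assoc)
    next
      case 7 then show ?thesis using fin4[OF \<open>z 6 < 4\<close>] unfolding h_def
        by (intro exI[of _ 6]) (simp add: G4_def ins4_def add.assoc)
    qed
  qed
qed


lemma base_solvable:
  fixes ins :: "nat \<Rightarrow> nat list" and G :: "nat \<Rightarrow> nat list \<Rightarrow> nat"
  assumes Gr: "\<And>i vs. G i vs < r"
    and win: "\<And>z. (\<And>u. u < n \<Longrightarrow> z u < r) \<Longrightarrow> \<exists>i<n. G i (map z (ins i)) = z i"
  shows "q_solvable r {..<n} {(u,i). i<n \<and> u \<in> set (ins i)}"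
proof -
  let ?f = "\<lambda>i z. G i (map z (ins i))"
  have "D_function r {..<n} {(u,i). i<n \<and> u \<in> set (ins i)} ?f"
    unfolding D_function_def in_nbrs_def
  proof (intro conjI ballI impI)
    fix v and x y :: "nat \<Rightarrow> nat" assume v: "v \<in> {..<n}" and h: "\<forall>u\<in>{u. (u, v) \<in> {(u, i). i < n \<and> u \<in> set (ins i)}}. x u = y u"
    have "map x (ins v) = map y (ins v)" using v h by (intro map_cong) auto
    then show "?f v x = ?f v y" by (rule arg_cong)
  qed (use Gr in auto)
  moreover have "\<forall>x\<in>configs r {..<n}. \<exists>v\<in>{..<n}. ?f v x = x v"
  proof
    fix x assume "x \<in> configs r {..<n}"
    then have "\<And>u. u < n \<Longrightarrow> x u < r" unfolding configs_def by auto
    from win[of x, OF this] show "\<exists>v\<in>{..<n}. ?f v x = x v" by auto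
  qed
  ultimately show ?thesis unfolding q_solvable_def by blast
qed

lemma blowup:
  fixes n m r P :: nat and AH :: "(nat\<times>nat) set"
  assumes sol: "q_solvable r {..<n} AH"
    and AHsub: "AH \<subseteq> {..<n} \<times> {..<n}"
    and orient: "\<And>i j. (i,j) \<in> AH \<Longrightarrow> (j,i) \<notin> AH"
    and n: "0<n" and m: "0<m" and r: "0<r"
  shows "\<exists>(V::nat set) E. digraph V E \<and> card V = n*m + P \<and> q_solvable (r*m) V E \<and> clique_number V E = m"
proof -
  define q where "q = r*m"
  have q: "0 < q" using r m by (simp add: q_def)
  define V where "V = {..<n*m+P}"
  define E where "E = {(a,b). a < n*m \<and> b < n*m \<and> a \<noteq> b \<and> (a div m = b div m \<or> (a div m, b div m) \<in> AH)}"
  obtain g where gD: "D_function r {..<n} AH g" and gW: "\<forall>z\<in>configs r {..<n}. \<exists>v\<in>{..<n}. g v z = z v"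
    using sol unfolding q_solvable_def by blast
  define bs where "bs x i = (\<Sum>j<m. x (i*m+j)) mod q" for x :: "nat \<Rightarrow> nat" and i
  define zz where "zz x = restrict (\<lambda>i. bs x i div m) {..<n}" for x
  define F where "F a x = (if a < n*m then nat ((int (g (a div m) (zz x) * m + a mod m)
       - int (\<Sum>j\<in>{..<m}-{a mod m}. x ((a div m)*m+j))) mod int q) else 0)" for a x
  have zzc: "zz x \<in> configs r {..<n}" for x
  proof -
    have "bs x i < r*m" for i unfolding bs_def q_def using q q_def by simp
    then have "bs x i div m < r" for i by (simp add: less_mult_imp_div_less)
    then show ?thesis unfolding zz_def configs_def by auto
  qed
  have blk: "i*m + j < n*m" if "i < n" "j < m" for i j
  proof -
    have "i*m + j < i*m + m" using that by simp
    also have "\<dots> = (i+1)*m" by simp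
    also have "\<dots> \<le> n*m" using that by (intro mult_right_mono) auto
    finally show ?thesis .
  qed
  have dm: "(i*m + j) div m = i" "(i*m+j) mod m = j" if "j < m" for i j
    using that m by auto
  have DF: "D_function q V E F"
    unfolding D_function_def
  proof (intro conjI ballI impI)
    fix v x assume "v \<in> V" "x \<in> configs q V"
    show "F v x < q" unfolding F_def using q
      by (auto simp: nat_less_iff)
  next
    fix a x y assume aV: "a \<in> V" and xc: "x \<in> configs q V" and yc: "y \<in> configs q V"
      and agree: "\<forall>u\<in>in_nbrs E a. x u = y u"
    show "F a x = F a y"
    proof (cases "a < n*m")
      case False then show ?thesis unfolding F_def by simp
    next
      case True
      define i where "i = a div m"
      have i: "i < n" using True m unfolding i_def by (simp add: less_mult_imp_div_less)
      have ai: "a = i*m + a mod m" unfolding i_def by simp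
      have s: "(\<Sum>j\<in>{..<m}-{a mod m}. x (i*m+j)) = (\<Sum>j\<in>{..<m}-{a mod m}. y (i*m+j))"
      proof (rule sum.cong[OF refl])
        fix j assume j: "j \<in> {..<m}-{a mod m}"
        have ne: "i*m+j \<noteq> a" using j ai by auto
        have "(i*m+j, a) \<in> E" unfolding E_def using j blk[OF i] True dm[of j i] ne
          by (auto simp: i_def)
        then show "x (i*m+j) = y (i*m+j)" using agree unfolding in_nbrs_def by auto
      qed
      have gz: "g i (zz x) = g i (zz y)"
      proof -
        have "\<forall>u\<in>in_nbrs AH i. zz x u = zz y u"
        proof
          fix u assume "u \<in> in_nbrs AH i"
          then have uA: "(u,i) \<in> AH" unfolding in_nbrs_def by simp
          then have u: "u < n" and ui: "u \<noteq> i" using AHsub orient by auto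
          have "bs x u = bs y u" unfolding bs_def
          proof (rule arg_cong[where f="\<lambda>s. s mod q"], rule sum.cong[OF refl])
            fix j assume j: "j \<in> {..<m}"
            have "(u*m+j, a) \<in> E" unfolding E_def using j blk[OF u] True dm[of j u] uA ui
              by (auto simp: i_def)
            then show "x (u*m+j) = y (u*m+j)" using agree unfolding in_nbrs_def by auto
          qed
          then show "zz x u = zz y u" unfolding zz_def using u by simp
        qed
        then show ?thesis using gD zzc i unfolding D_function_def by blast
      qed
      show ?thesis unfolding F_def using True s gz by (simp add: i_def)
    qed
  qed
  have WF: "\<forall>x\<in>configs q V. \<exists>v\<in>V. F v x = x v"
  proof
    fix x assume xc: "x \<in> configs q V"
    obtain i where i: "i < n" and gi: "g i (zz x) = zz x i" using gW zzc by blast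
    define s where "s = bs x i"
    define j0 where "j0 = s mod m"
    define a where "a = i*m + j0"
    have j0: "j0 < m" using m unfolding j0_def by simp
    have aN: "a < n*m" unfolding a_def using blk[OF i j0] .
    have aV: "a \<in> V" using aN unfolding V_def by simp
    have xa: "x a < q" using xc aV unfolding configs_def by auto
    have ad: "a div m = i" "a mod m = j0" unfolding a_def using dm[OF j0] by auto
    define S' where "S' = (\<Sum>j\<in>{..<m}-{j0}. x (i*m+j))"
    have sum: "(\<Sum>j<m. x (i*m+j)) = x a + S'"
      unfolding S'_def a_def using j0 by (simp add: sum.remove[of "{..<m}" j0])
    have gv: "g i (zz x) = s div m" using gi i unfolding zz_def s_def by simp
    have "F a x = nat ((int (s div m * m + s mod m) - int S') mod int q)"
      unfolding F_def using aN ad gv by (simp add: S'_def j0_def)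
    also have "s div m * m + s mod m = s" by simp
    also have "int s = (int (x a) + int S') mod int q"
      unfolding s_def bs_def sum by (simp add: zmod_int)
    also have "((int (x a) + int S') mod int q - int S') mod int q = int (x a) mod int q"
      by (metis mod_diff_left_eq add_diff_cancel_right')
    also have "int (x a) mod int q = int (x a)" using xa by simp
    finally show "\<exists>v\<in>V. F v x = x v" using aV by auto
  qed
  have dig: "digraph V E" unfolding digraph_def V_def E_def by auto
  have cardV: "card V = n*m + P" unfolding V_def by simp
  have cl: "clique_number V E = m"
  proof -
    let ?C = "{S. is_clique V E S}"
    have fin: "finite ?C"
      by (rule finite_subset[of _ "Pow V"]) (auto simp: is_clique_def V_def)
    have b0: "{..<m} \<in> ?C"
    proof -
      have mm: "m \<le> n*m" using n by simp
      then show ?thesis unfolding is_clique_def V_def E_def by (auto dest: order_less_le_trans[OF _ mm] intro: trans_le_add1)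
    qed
    have le: "card S \<le> m" if "S \<in> ?C" for S
    proof (cases "S = {}")
      case True then show ?thesis by simp
    next
      case False
      then obtain a where aS: "a \<in> S" by blast
      have "S \<subseteq> (\<lambda>j. (a div m)*m + j) ` {..<m}"
      proof
        fix b assume bS: "b \<in> S"
        have "b div m = a div m"
        proof (cases "b = a")
          case False
          then have "(a,b) \<in> E" "(b,a) \<in> E" using that aS bS unfolding is_clique_def by auto
          then show ?thesis unfolding E_def using orient by auto
        qed simp
        moreover have "b = (b div m)*m + b mod m" by simp
        moreover have "b mod m < m" using m by simp
        ultimately show "b \<in> (\<lambda>j. (a div m)*m + j) ` {..<m}" by (metis imageI lessThan_iff)
      qed
      then have "card S \<le> card ((\<lambda>j. (a div m)*m + j) ` {..<m})" by (rule card_mono[rotated]) simp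
      also have "\<dots> \<le> card {..<m::nat}" by (rule card_image_le) simp
      finally show ?thesis by simp
    qed
    show ?thesis unfolding clique_number_def
      using fin b0 le by (intro Max_eqI) (auto intro!: image_eqI[where x="{..<m}"])
  qed
  show ?thesis
    using dig cardV DF WF cl unfolding q_def q_solvable_def by blast
qed

lemma lt_cases3: "(i::nat) < 3 \<Longrightarrow> i = 0 \<or> i = 1 \<or> i = 2" by auto
lemma lt_cases6: "(i::nat) < 6 \<Longrightarrow> i = 0 \<or> i = 1 \<or> i = 2 \<or> i = 3 \<or> i = 4 \<or> i = 5" by auto
lemma lt_cases7: "(i::nat) < 7 \<Longrightarrow> i = 0 \<or> i = 1 \<or> i = 2 \<or> i = 3 \<or> i = 4 \<or> i = 5 \<or> i = 6" by auto

definition ins2 :: "nat \<Rightarrow> nat list" where "ins2 i = [(i+2) mod 3]"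
definition G2 :: "nat \<Rightarrow> nat list \<Rightarrow> nat" where "G2 i vs = sum_list vs mod 2"

lemma sol2: "q_solvable 2 {..<3} {(u,i). i<3 \<and> u \<in> set (ins2 i)}"
proof (rule base_solvable)
  show "G2 i vs < 2" for i vs by (simp add: G2_def)
  fix z :: "nat \<Rightarrow> nat" assume "\<And>u. u < 3 \<Longrightarrow> z u < 2"
  then have a: "z 0 < 2" "z 1 < 2" "z 2 < 2" by auto
  have t: "(x::nat) < 2 \<Longrightarrow> x = 0 \<or> x = 1" for x by auto
  have "z 2 = z 0 \<or> z 0 = z 1 \<or> z 1 = z 2"
    using t[OF a(1)] t[OF a(2)] t[OF a(3)] by auto
  then show "\<exists>i<3. G2 i (map z (ins2 i)) = z i"
  proof (elim disjE)
    assume "z 2 = z 0" then show ?thesis using a by (intro exI[of _ 0]) (simp add: G2_def ins2_def numeral_2_eq_2)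
  next
    assume "z 0 = z 1" then show ?thesis using a by (intro exI[of _ 1]) (simp add: G2_def ins2_def numeral_2_eq_2)
  next
    assume "z 1 = z 2" then show ?thesis using a by (intro exI[of _ 2]) (simp add: G2_def ins2_def numeral_2_eq_2)
  qed
qed

lemma AH2: "{(u,i). i<3 \<and> u \<in> set (ins2 i)} \<subseteq> {..<3} \<times> {..<3}"
  "\<And>i j. (i,j) \<in> {(u,i). i<3 \<and> u \<in> set (ins2 i)} \<Longrightarrow> (j,i) \<notin> {(u,i). i<3 \<and> u \<in> set (ins2 i)}"
  by (auto simp: ins2_def dest!: lt_cases3)

definition ins3 :: "nat \<Rightarrow> nat list" where
  "ins3 i = [[1,3],[2,3,5],[0,5],[2,4],[0,1,2],[0,3,4]] ! i"
definition coef3 :: "nat \<Rightarrow> nat list" where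
  "coef3 i = [[1,1],[2,2,2],[2,2],[1,2],[2,1,1],[2,2,2]] ! i"
definition G3 :: "nat \<Rightarrow> nat list \<Rightarrow> nat" where
  "G3 i vs = sum_list (map (\<lambda>(c,v). c*v) (zip (coef3 i) vs)) mod 3"

lemma sol3: "q_solvable 3 {..<6} {(u,i). i<6 \<and> u \<in> set (ins3 i)}"
proof (rule base_solvable)
  show "G3 i vs < 3" for i vs by (simp add: G3_def)
  fix z :: "nat \<Rightarrow> nat" assume "\<And>u. u < 6 \<Longrightarrow> z u < 3"
  then have a: "z 0 < 3" "z 1 < 3" "z 2 < 3" "z 3 < 3" "z 4 < 3" "z 5 < 3" by auto
  from win3[OF a] show "\<exists>i<6. G3 i (map z (ins3 i)) = z i"
  proof (elim disjE)
    assume "(z 1 + z 3) mod 3 = z 0" then show ?thesis by (intro exI[of _ 0]) (simp add: G3_def ins3_def coef3_def)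
  next
    assume "(2 * z 2 + 2 * z 3 + 2 * z 5) mod 3 = z 1" then show ?thesis by (intro exI[of _ 1]) (simp add: G3_def ins3_def coef3_def add.assoc)
  next
    assume "(2 * z 0 + 2 * z 5) mod 3 = z 2" then show ?thesis by (intro exI[of _ 2]) (simp add: G3_def ins3_def coef3_def)
  next
    assume "(z 2 + 2 * z 4) mod 3 = z 3" then show ?thesis by (intro exI[of _ 3]) (simp add: G3_def ins3_def coef3_def)
  next
    assume "(2 * z 0 + z 1 + z 2) mod 3 = z 4" then show ?thesis by (intro exI[of _ 4]) (simp add: G3_def ins3_def coef3_def add.assoc)
  next
    assume "(2 * z 0 + 2 * z 3 + 2 * z 4) mod 3 = z 5" then show ?thesis by (intro exI[of _ 5]) (simp add: G3_def ins3_def coef3_def add.assoc)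
  qed
qed

lemma AH3: "{(u,i). i<6 \<and> u \<in> set (ins3 i)} \<subseteq> {..<6} \<times> {..<6}"
  "\<And>i j. (i,j) \<in> {(u,i). i<6 \<and> u \<in> set (ins3 i)} \<Longrightarrow> (j,i) \<notin> {(u,i). i<6 \<and> u \<in> set (ins3 i)}"
  by (auto simp: ins3_def dest!: lt_cases6)

lemma sol4: "q_solvable 4 {..<7} {(u,i). i<7 \<and> u \<in> set (ins4 i)}"
proof (rule base_solvable)
  show "G4 i vs < 4" for i vs by (simp add: G4_def)
  fix z :: "nat \<Rightarrow> nat" assume "\<And>u. u < 7 \<Longrightarrow> z u < 4"
  then show "\<exists>i<7. G4 i (map z (ins4 i)) = z i" by (rule win4)
qed

lemma AH4: "{(u,i). i<7 \<and> u \<in> set (ins4 i)} \<subseteq> {..<7} \<times> {..<7}"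
  "\<And>i j. (i,j) \<in> {(u,i). i<7 \<and> u \<in> set (ins4 i)} \<Longrightarrow> (j,i) \<notin> {(u,i). i<7 \<and> u \<in> set (ins4 i)}"
  by (auto simp: ins4_def dest!: lt_cases7)

theorem theorem7:
  shows "(\<forall>q::nat. even q \<and> q \<ge> 2 \<longrightarrow>
            (\<exists>(V::nat set) E. digraph V E \<and> card V = 3 * q div 2 \<and>
                q_solvable q V E \<and> clique_number V E = q div 2))
       \<and> (\<forall>q::nat. q > 0 \<and> 3 dvd q \<longrightarrow>
            (\<exists>(V::nat set) E. digraph V E \<and> card V = 4 * q \<and>
                q_solvable q V E \<and> clique_number V E = q div 3))
       \<and> (\<forall>q::nat. q > 0 \<and> 4 dvd q \<longrightarrow>
            (\<exists>(V::nat set) E. digraph V E \<and> card V = 10 * q \<and>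
                q_solvable q V E \<and> clique_number V E = q div 4))"
  
proof (intro conjI allI impI)
  fix q :: nat assume h: "even q \<and> q \<ge> 2"
  define m where "m = q div 2"
  have qm: "q = 2*m" and m: "0 < m" using h unfolding m_def by auto
  obtain V E where "digraph (V::nat set) E" "card V = 3*m + 0" "q_solvable (2*m) V E" "clique_number V E = m"
    using blowup[OF sol2 AH2(1) AH2(2), of m 0] m by auto
  moreover have "3*q div 2 = 3*m" "q div 2 = m" using qm by auto
  ultimately show "\<exists>(V::nat set) E. digraph V E \<and> card V = 3 * q div 2 \<and> q_solvable q V E \<and> clique_number V E = q div 2"
    using qm by auto
next
  fix q :: nat assume h: "q > 0 \<and> 3 dvd q"
  define m where "m = q div 3"
  have qm: "q = 3*m" and m: "0 < m" using h unfolding m_def by auto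
  obtain V E where "digraph (V::nat set) E" "card V = 6*m + 6*m" "q_solvable (3*m) V E" "clique_number V E = m"
    using blowup[OF sol3 AH3(1) AH3(2), of m "6*m"] m by auto
  moreover have "6*m + 6*m = 4*q" "q div 3 = m" using qm by auto
  ultimately show "\<exists>(V::nat set) E. digraph V E \<and> card V = 4 * q \<and> q_solvable q V E \<and> clique_number V E = q div 3"
    using qm by auto
next
  fix q :: nat assume h: "q > 0 \<and> 4 dvd q"
  define m where "m = q div 4"
  have qm: "q = 4*m" and m: "0 < m" using h unfolding m_def by auto
  obtain V E where "digraph (V::nat set) E" "card V = 7*m + 33*m" "q_solvable (4*m) V E" "clique_number V E = m"
    using blowup[OF sol4 AH4(1) AH4(2), of m "33*m"] m by auto
  moreover have "7*m + 33*m = 10*q" "q div 4 = m" using qm by auto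
  ultimately show "\<exists>(V::nat set) E. digraph V E \<and> card V = 10 * q \<and> q_solvable q V E \<and> clique_number V E = q div 4"
    using qm by auto
qed

end
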